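(* Let $L$ be a sublattice of $A_n$ of rank $n$, let $v\in H_0$, and put $h=h_{\triangle,L}(v)$. Consider the simplex $S(v)=\{u\in H_0: u_j\ge v_j-h\ \forall j\}$ and its facets $F_i=\{u\in S(v): u_i=v_i-h\}$, $i=0,\dots,n$. Then $v\in\mathrm{Crit}(L)$ if and only if for each $i\in\{0,\dots,n\}$ there exists $p_i\in L$ with $p_i\in F_i$ and $p_i\notin F_j$ for all $j\neq i$. In particular, every $v\in\mathrm{Crit}(L)$ lies in the intersection $V_\triangle(p_0)\cap\dots\cap V_\triangle(p_n)$ of $n+1$ Voronoi cells of distinct points $p_0,\dots,p_n\in L$.
   Context: Let $n\ge 1$, $H_0=\{x\in\mathbb R^{n+1}:\sum_i x_i=0\}$ and $A_n=H_0\cap\mathbb Z^{n+1}$. For $p,q\in H_0$ let $d_\triangle(p,q)=\max_i(p_i-q_i)$, and for $x\in H_0$ let $h_{\triangle,L}(x)=\min_{p\in L}d_\triangle(x,p)$. $\mathrm{Crit}(L)$ denotes the set of points of $H_0$ that are local maxima of $h_{\triangle,L}$ on $H_0$. For $p\in L$, the Voronoi cell is $V_\triangle(p)=\{x\in H_0: d_\triangle(x,p)\le d_\triangle(x,p')\ \forall p'\in L\}$. *)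

theory Defs
  imports "HOL-Analysis.Analysis"
begin

text \<open>Coordinates of R^{n+1} are indexed by the finite type 'n, with CARD('n) = n+1.\<close>

definition H0 :: "(real^'n::finite) set" where
  "H0 = {x. (\<Sum>i\<in>UNIV. x $ i) = 0}"

definition A_lat :: "(real^'n::finite) set" where
  "A_lat = {x \<in> H0. \<forall>i. x $ i \<in> \<int>}"

text \<open>A sublattice of A_n: an additive subgroup of A_n. Its rank is the dimension of its span.\<close>
definition sublattice :: "(real^'n::finite) set \<Rightarrow> bool" where
  "sublattice L \<longleftrightarrow> L \<subseteq> A_lat \<and> 0 \<in> L \<and> (\<forall>x\<in>L. \<forall>y\<in>L. x + y \<in> L) \<and> (\<forall>x\<in>L. - x \<in> L)"

definition d_tri :: "real^'n::finite \<Rightarrow> real^'n \<Rightarrow> real" where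
  "d_tri p q = Max (range (\<lambda>i. p $ i - q $ i))"

definition h_tri :: "(real^'n::finite) set \<Rightarrow> real^'n \<Rightarrow> real" where
  "h_tri L x = (INF p\<in>L. d_tri x p)"

definition Crit :: "(real^'n::finite) set \<Rightarrow> (real^'n) set" where
  "Crit L = {v \<in> H0. \<exists>e>0. \<forall>x\<in>H0. dist x v < e \<longrightarrow> h_tri L x \<le> h_tri L v}"

definition Vor :: "(real^'n::finite) set \<Rightarrow> real^'n \<Rightarrow> (real^'n) set" where
  "Vor L p = {x \<in> H0. \<forall>p'\<in>L. d_tri x p \<le> d_tri x p'}"

definition simplexS :: "(real^'n::finite) set \<Rightarrow> real^'n \<Rightarrow> (real^'n) set" where
  "simplexS L v = {u \<in> H0. \<forall>j. u $ j \<ge> v $ j - h_tri L v}"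

definition facetF :: "(real^'n::finite) set \<Rightarrow> real^'n \<Rightarrow> 'n \<Rightarrow> (real^'n) set" where
  "facetF L v i = {u \<in> simplexS L v. u $ i = v $ i - h_tri L v}"

end

theory Submission
  imports Defs
begin

lemma d_ge: "p $ i - q $ i \<le> d_tri p q"
  unfolding d_tri_def by (rule Max_ge) auto

lemma d_ex: "\<exists>i. d_tri p q = p $ i - q $ i"
proof -
  have "d_tri p q \<in> range (\<lambda>i. p $ i - q $ i)"
    unfolding d_tri_def by (rule Max_in) auto
  then show ?thesis by auto
qed

lemma d_le_iff: "d_tri p q \<le> c \<longleftrightarrow> (\<forall>i. p $ i - q $ i \<le> c)"
  unfolding d_tri_def by (subst Max_le_iff) auto

lemma d_gr_iff: "c < d_tri p q \<longleftrightarrow> (\<exists>i. c < p $ i - q $ i)"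
  unfolding d_tri_def by (subst Max_gr_iff) auto

lemma H0_sum: "x \<in> H0 \<Longrightarrow> (\<Sum>i\<in>UNIV. x $ i) = 0"
  by (simp add: H0_def)

lemma exists_le: assumes "x \<in> H0" "y \<in> H0" shows "\<exists>i. x $ i \<le> y $ i"
proof (rule ccontr)
  assume "\<not> ?thesis"
  then have "0 < (\<Sum>i\<in>UNIV. x $ i - y $ i)"
    by (intro sum_pos) (auto simp: not_le)
  also have "\<dots> = 0" using assms by (simp add: sum_subtractf H0_sum)
  finally show False by simp
qed

lemma d_nonneg: assumes "x \<in> H0" "y \<in> H0" shows "0 \<le> d_tri x y"
proof -
  obtain i where "y $ i \<le> x $ i" using exists_le[OF assms(2,1)] by blast
  then show ?thesis using d_ge[of x i y] by linarith
qed

lemma subl_H0: "sublattice L \<Longrightarrow> p \<in> L \<Longrightarrow> p \<in> H0"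
  by (auto simp: sublattice_def A_lat_def)

lemma subl_int: "sublattice L \<Longrightarrow> p \<in> L \<Longrightarrow> p $ j \<in> \<int>"
  by (auto simp: sublattice_def A_lat_def)

lemma fin_ball:
  assumes L: "sublattice L"
  shows "finite {p\<in>L. d_tri v p \<le> C}"
proof -
  define K where "K = (\<Sum>j\<in>UNIV. \<bar>v $ j\<bar>) + \<bar>C\<bar>"
  define N where "N = real CARD('a)"
  define M where "M = \<lceil>N * K\<rceil>"
  have K0: "K \<ge> 0" unfolding K_def by (simp add: sum_nonneg)
  have N1: "N \<ge> 1" unfolding N_def by simp
  have vb: "\<bar>v $ j\<bar> \<le> (\<Sum>j\<in>UNIV. \<bar>v $ j\<bar>)" for j
    by (rule member_le_sum) auto
  have "{p\<in>L. d_tri v p \<le> C} \<subseteq> (\<lambda>f. \<chi> j. of_int (f j)) ` (Pi\<^sub>E UNIV (\<lambda>_. {-M..M}))"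
  proof
    fix p assume "p \<in> {p\<in>L. d_tri v p \<le> C}"
    then have pL: "p \<in> L" and pd: "d_tri v p \<le> C" by auto
    have low: "p $ j \<ge> -K" for j
    proof -
      have "v $ j - p $ j \<le> C" using pd d_le_iff by blast
      then show ?thesis using vb[of j] unfolding K_def by linarith
    qed
    have up: "p $ j \<le> N * K" for j
    proof -
      have "0 = (\<Sum>k\<in>UNIV. p $ k)" using H0_sum[OF subl_H0[OF L pL]] by simp
      also have "\<dots> = p $ j + (\<Sum>k\<in>UNIV - {j}. p $ k)" by (rule sum.remove) auto
      finally have e: "p $ j = - (\<Sum>k\<in>UNIV - {j}. p $ k)" by linarith
      have "(\<Sum>k\<in>UNIV - {j}. -K) \<le> (\<Sum>k\<in>UNIV - {j}. p $ k)"
        by (rule sum_mono) (use low in auto)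
      then have "- (\<Sum>k\<in>UNIV - {j}. p $ k) \<le> real (card (UNIV - {j} :: 'a set)) * K"
        by simp
      also have "\<dots> \<le> N * K" unfolding N_def
        by (intro mult_right_mono K0) (simp add: card_mono)
      finally show ?thesis using e by linarith
    qed
    define f where "f = (\<lambda>j. \<lfloor>p $ j\<rfloor>)"
    have fe: "of_int (f j) = p $ j" for j
      using subl_int[OF L pL, of j] unfolding f_def by (metis Ints_cases floor_of_int)
    have "f \<in> Pi\<^sub>E UNIV (\<lambda>_. {-M..M})"
    proof -
      have "f j \<in> {-M..M}" for j
      proof -
        have a: "- K \<le> p $ j" "p $ j \<le> N * K" using low up by auto
        have "-K \<ge> - (N*K)" using K0 N1 by (simp add: mult_left_mono[of 1 N K, simplified] mult.commute)
        then have "real_of_int (f j) \<ge> - real_of_int M" "real_of_int (f j) \<le> real_of_int M"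
          using a fe[of j] unfolding M_def by (linarith, linarith)
        then show ?thesis by simp
      qed
      then show ?thesis by auto
    qed
    moreover have "p = (\<chi> j. of_int (f j))" by (simp add: vec_eq_iff fe)
    ultimately show "p \<in> (\<lambda>f. \<chi> j. of_int (f j)) ` (Pi\<^sub>E UNIV (\<lambda>_. {-M..M}))" by blast
  qed
  moreover have "finite ((\<lambda>f. \<chi> j. of_int (f j)) ` (Pi\<^sub>E UNIV (\<lambda>_. {-M..M})) :: (real^'a) set)"
    by (intro finite_imageI finite_PiE) auto
  ultimately show ?thesis by (rule finite_subset)
qed

lemma h_attain:
  assumes L: "sublattice L" and x: "x \<in> H0"
  shows "\<exists>q\<in>L. h_tri L x = d_tri x q \<and> (\<forall>p\<in>L. d_tri x q \<le> d_tri x p)"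
proof -
  define P where "P = {p\<in>L. d_tri x p \<le> d_tri x 0}"
  have fP: "finite P" unfolding P_def by (rule fin_ball[OF L])
  have 0: "0 \<in> P" using L unfolding P_def sublattice_def by auto
  define m where "m = Min (d_tri x ` P)"
  have "m \<in> d_tri x ` P" unfolding m_def using fP 0 by (intro Min_in) auto
  then obtain q where qP: "q \<in> P" and mq: "m = d_tri x q" by auto
  have lb: "m \<le> d_tri x p" if "p \<in> L" for p
  proof (cases "p \<in> P")
    case True then show ?thesis unfolding m_def using fP by simp
  next
    case False
    then have "d_tri x p > d_tri x 0" using that unfolding P_def by auto
    moreover have "m \<le> d_tri x 0" unfolding m_def using fP 0 by simp
    ultimately show ?thesis by simp
  qed
  have "h_tri L x = m"
  proof (rule antisym)
    show "h_tri L x \<le> m" unfolding h_tri_def mq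
      by (rule cINF_lower) (use lb qP P_def in \<open>auto intro!: bdd_belowI2[where m=m]\<close>)
    show "m \<le> h_tri L x" unfolding h_tri_def
      by (rule cINF_greatest) (use lb 0 P_def in auto)
  qed
  then show ?thesis using qP lb mq unfolding P_def by auto
qed


lemma h_le: "sublattice L \<Longrightarrow> x \<in> H0 \<Longrightarrow> p \<in> L \<Longrightarrow> h_tri L x \<le> d_tri x p"
  using h_attain by metis

lemma facet_iff:
  assumes L: "sublattice L" and pL: "p \<in> L"
  shows "p \<in> facetF L v i \<longleftrightarrow> (\<forall>j. v $ j - p $ j \<le> h_tri L v) \<and> v $ i - p $ i = h_tri L v"
  using subl_H0[OF L pL] unfolding facetF_def simplexS_def by (auto simp: algebra_simps)

lemma d_shift:
  assumes "t \<ge> 0" "\<And>j. w $ j \<ge> - N"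
  shows "d_tri v p - t * N \<le> d_tri (v + t *\<^sub>R w) p"
proof -
  obtain k where k: "d_tri v p = v $ k - p $ k" using d_ex by blast
  have "t * (- N) \<le> t * w $ k" by (rule mult_left_mono) (use assms in auto)
  then have "d_tri v p - t * N \<le> (v + t *\<^sub>R w) $ k - p $ k" using k by simp
  also have "\<dots> \<le> d_tri (v + t *\<^sub>R w) p" by (rule d_ge)
  finally show ?thesis .
qed

lemma dirA:
  fixes L :: "(real^'n::finite) set" and v :: "real^'n"
  assumes L: "sublattice L" and v: "v \<in> H0"
    and c: "\<forall>i. \<exists>p\<in>L. p \<in> facetF L v i \<and> (\<forall>j. j \<noteq> i \<longrightarrow> p \<notin> facetF L v j)"
  shows "v \<in> Crit L"
proof -
  define h where "h = h_tri L v"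
  obtain p where p: "\<And>i. p i \<in> L \<and> p i \<in> facetF L v i \<and> (\<forall>j. j \<noteq> i \<longrightarrow> p i \<notin> facetF L v j)"
    using c by metis
  have pL: "p i \<in> L" for i using p by blast
  have pi: "v $ i - p i $ i = h" for i using p[of i] facet_iff[OF L pL[of i]] unfolding h_def by blast
  have pj: "v $ j - p i $ j < h" if "j \<noteq> i" for i j
  proof -
    have "v $ j - p i $ j \<le> h" using p[of i] facet_iff[OF L pL[of i]] unfolding h_def by blast
    moreover have "v $ j - p i $ j \<noteq> h"
      using p[of i] that facet_iff[OF L pL[of i], of v j] facet_iff[OF L pL[of i], of v i] unfolding h_def by blast
    ultimately show ?thesis by simp
  qed
  have ev: "eventually (\<lambda>x. \<forall>i j. j \<noteq> i \<longrightarrow> x $ j - p i $ j < x $ i - p i $ i) (nhds v)"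
  proof (intro eventually_all_finite allI)
    fix i j :: 'n
    show "eventually (\<lambda>x. j \<noteq> i \<longrightarrow> x $ j - p i $ j < x $ i - p i $ i) (nhds v)"
    proof (cases "j = i")
      case True then show ?thesis by simp
    next
      case False
      define \<delta> where "\<delta> = h - (v $ j - p i $ j)"
      have d0: "\<delta> > 0" using pj[OF False] unfolding \<delta>_def by simp
      show ?thesis unfolding eventually_nhds_metric
      proof (intro exI[of _ "\<delta>/2"] conjI allI impI)
        show "\<delta>/2 > 0" using d0 by simp
        fix x assume dx: "dist x v < \<delta>/2"
        have "\<bar>x $ k - v $ k\<bar> < \<delta>/2" for k
          using dist_vec_nth_le[of x k v] dx by (simp add: dist_real_def)
        from this[of i] this[of j] show "x $ j - p i $ j < x $ i - p i $ i"
          using pi[of i] unfolding \<delta>_def abs_less_iff by (elim conjE) (smt (verit) field_sum_of_halves)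
      qed
    qed
  qed
  then obtain e where e: "e > 0" and he: "\<And>x. dist x v < e \<Longrightarrow> \<forall>i j. j \<noteq> i \<longrightarrow> x $ j - p i $ j < x $ i - p i $ i"
    unfolding eventually_nhds_metric by blast
  show ?thesis unfolding Crit_def
  proof (intro CollectI conjI exI[of _ e] ballI impI v e)
    fix x assume x: "x \<in> H0" and dx: "dist x v < e"
    obtain i where xi: "x $ i \<le> v $ i" using exists_le[OF x v] by blast
    have "d_tri x (p i) \<le> x $ i - p i $ i"
      unfolding d_le_iff using he[OF dx] by (metis order.strict_implies_order order_refl)
    moreover have "h_tri L x \<le> d_tri x (p i)" by (rule h_le[OF L x pL])
    ultimately show "h_tri L x \<le> h_tri L v" using xi pi[of i] unfolding h_def by linarith
  qed
qed


lemma dirB: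
  fixes L :: "(real^'n::finite) set" and v :: "real^'n"
  assumes L: "sublattice L" and v: "v \<in> H0" and cr: "v \<in> Crit L"
  shows "\<forall>i. \<exists>p\<in>L. p \<in> facetF L v i \<and> (\<forall>j. j \<noteq> i \<longrightarrow> p \<notin> facetF L v j)"
proof (rule ccontr)
  define h where "h = h_tri L v"
  assume "\<not> ?thesis"
  then obtain i where ni: "\<And>p. p \<in> L \<Longrightarrow> p \<in> facetF L v i \<Longrightarrow> \<exists>j. j \<noteq> i \<and> p \<in> facetF L v j"
    by blast
  obtain e where e: "e > 0" and he: "\<And>x. x \<in> H0 \<Longrightarrow> dist x v < e \<Longrightarrow> h_tri L x \<le> h"
    using cr unfolding Crit_def h_def by blast
  define N where "N = real CARD('n)"
  have N1: "N \<ge> 1" unfolding N_def by simp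
  define w :: "real^'n" where "w = (\<chi> j. if j = i then -(N - 1) else 1)"
  have wN: "w $ j \<ge> - N" for j unfolding w_def using N1 by auto
  have sw: "(\<Sum>j\<in>UNIV. w $ j) = 0"
  proof -
    have "(\<Sum>j\<in>UNIV. w $ j) = w $ i + (\<Sum>j\<in>UNIV - {i}. w $ j)" by (rule sum.remove) auto
    also have "(\<Sum>j\<in>UNIV - {i}. w $ j) = (\<Sum>j\<in>UNIV - {i}. 1)" by (rule sum.cong) (auto simp: w_def)
    also have "\<dots> = N - 1" unfolding N_def by (simp add: card_Diff_singleton_if of_nat_diff)
    finally show ?thesis unfolding w_def by simp
  qed
  have hmin: "\<And>p. p \<in> L \<Longrightarrow> h \<le> d_tri v p" unfolding h_def using h_le[OF L v] .
  define P where "P = {p\<in>L. d_tri v p \<le> h + 1}"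
  have fP: "finite P" unfolding P_def by (rule fin_ball[OF L])
  have evP: "\<forall>p\<in>P. eventually (\<lambda>t. h < d_tri (v + t *\<^sub>R w) p) (at_right 0)"
  proof
    fix p assume "p \<in> P"
    then have pL: "p \<in> L" unfolding P_def by auto
    show "eventually (\<lambda>t. h < d_tri (v + t *\<^sub>R w) p) (at_right (0::real))"
    proof (cases "d_tri v p = h")
      case False
      then have gt: "d_tri v p > h" using hmin[OF pL] by simp
      show ?thesis unfolding eventually_at_right_field
      proof (intro exI[of _ "(d_tri v p - h) / N"] conjI allI impI)
        show "0 < (d_tri v p - h) / N" using gt N1 by simp
        fix t :: real assume t: "t > 0" "t < (d_tri v p - h) / N"
        then have "t * N < d_tri v p - h" using N1 by (simp add: pos_less_divide_eq)
        then show "h < d_tri (v + t *\<^sub>R w) p" using d_shift[where t=t and w=w and N=N and v=v and p=p, OF _ wN] t by linarith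
      qed
    next
      case True
      obtain k where k: "d_tri v p = v $ k - p $ k" using d_ex by blast
      have all: "\<forall>j. v $ j - p $ j \<le> h" using True d_le_iff[of v p h] by simp
      have "\<exists>j. j \<noteq> i \<and> v $ j - p $ j = h"
      proof (cases "k = i")
        case True
        then have "p \<in> facetF L v i" using facet_iff[OF L pL] all k \<open>d_tri v p = h\<close> unfolding h_def by auto
        then obtain j where "j \<noteq> i" "p \<in> facetF L v j" using ni[OF pL] by blast
        then show ?thesis using facet_iff[OF L pL] unfolding h_def by blast
      next
        case False then show ?thesis using k \<open>d_tri v p = h\<close> by auto
      qed
      then obtain j where j: "j \<noteq> i" "v $ j - p $ j = h" by blast
      show ?thesis unfolding eventually_at_right_field
      proof (intro exI[of _ 1] conjI allI impI)
        fix t :: real assume t: "t > 0" "t < 1"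
        have "(v + t *\<^sub>R w) $ j - p $ j = h + t" using j by (simp add: w_def algebra_simps)
        then show "h < d_tri (v + t *\<^sub>R w) p" using d_ge[of "v + t *\<^sub>R w" j p] t by linarith
      qed simp
    qed
  qed
  define b where "b = min (1 / N) (e / (norm w + 1))"
  have b0: "b > 0" unfolding b_def using N1 e by (simp add: add_pos_nonneg divide_pos_pos add_nonneg_pos)
  have "eventually (\<lambda>t. (\<forall>p\<in>P. h < d_tri (v + t *\<^sub>R w) p) \<and> t < b) (at_right (0::real))"
    using eventually_ball_finite[OF fP evP] b0
    by (intro eventually_conj) (auto simp: eventually_at_right_field)
  then obtain b' where b': "b' > 0" "\<And>t. t > 0 \<Longrightarrow> t < b' \<Longrightarrow> (\<forall>p\<in>P. h < d_tri (v + t *\<^sub>R w) p) \<and> t < b"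
    unfolding eventually_at_right_field by blast
  define t where "t = b' / 2"
  have t: "t > 0" "t < b'" unfolding t_def using b' by auto
  note tt = b'(2)[OF t]
  define x where "x = v + t *\<^sub>R w"
  have xH: "x \<in> H0" using v sw unfolding x_def H0_def by (simp add: sum.distrib sum_distrib_left[symmetric])
  have nw: "norm w + 1 > 0" by (simp add: add_nonneg_pos)
  have "t * (norm w + 1) < e" using tt t nw unfolding b_def by (simp add: less_divide_eq)
  then have "dist x v < e" unfolding x_def dist_norm using t by (simp add: algebra_simps)
  then have hx: "h_tri L x \<le> h" using he[OF xH] by blast
  obtain q where q: "q \<in> L" "h_tri L x = d_tri x q" using h_attain[OF L xH] by blast
  have "h < d_tri x q"
  proof (cases "q \<in> P")
    case True then show ?thesis using tt unfolding x_def by blast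
  next
    case False
    then have "d_tri v q > h + 1" using q unfolding P_def by auto
    moreover have "t * N < 1" using tt t N1 unfolding b_def by (simp add: less_divide_eq mult.commute)
    ultimately show ?thesis using d_shift[where t=t and w=w and N=N and v=v and p=q, OF _ wN] t unfolding x_def by linarith
  qed
  then show False using hx q by simp
qed

theorem mainTheorem13:
  fixes L :: "(real^'n::finite) set" and v :: "real^'n"
  assumes "CARD('n) \<ge> 2"
    and "sublattice L"
    and "dim L = CARD('n) - 1"
    and "v \<in> H0"
  shows "(v \<in> Crit L \<longleftrightarrow>
           (\<forall>i. \<exists>p\<in>L. p \<in> facetF L v i \<and> (\<forall>j. j \<noteq> i \<longrightarrow> p \<notin> facetF L v j)))
       \<and> (v \<in> Crit L \<longrightarrow>
           (\<exists>p :: 'n \<Rightarrow> real^'n. inj p \<and> (\<forall>i. p i \<in> L) \<and> (\<forall>i. v \<in> Vor L (p i))))"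
proof -
  note L = assms(2) and v = assms(4)
  have eq: "v \<in> Crit L \<longleftrightarrow>
           (\<forall>i. \<exists>p\<in>L. p \<in> facetF L v i \<and> (\<forall>j. j \<noteq> i \<longrightarrow> p \<notin> facetF L v j))"
    using dirA[OF L v] dirB[OF L v] by blast
  have "\<exists>p :: 'n \<Rightarrow> real^'n. inj p \<and> (\<forall>i. p i \<in> L) \<and> (\<forall>i. v \<in> Vor L (p i))" if cr: "v \<in> Crit L"
  proof -
    obtain p where p: "\<And>i. p i \<in> L \<and> p i \<in> facetF L v i \<and> (\<forall>j. j \<noteq> i \<longrightarrow> p i \<notin> facetF L v j)"
      using cr eq by metis
    have "inj p"
    proof (rule injI, rule ccontr)
      fix a b assume "p a = p b" "a \<noteq> b"
      then show False using p[of a] p[of b] by metis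
    qed
    moreover have "v \<in> Vor L (p i)" for i
    proof -
      have pL: "p i \<in> L" using p by blast
      have "d_tri v (p i) \<le> h_tri L v"
        using p[of i] facet_iff[OF L pL] d_le_iff by blast
      then show ?thesis unfolding Vor_def using v h_le[OF L v] by fastforce
    qed
    ultimately show ?thesis using p by blast
  qed
  with eq show ?thesis by blast
qed

end
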